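(* Let $a,a^\dagger$ be the annihilation and creation operators of the harmonic oscillator, $[a,a^\dagger]=1$, with vacuum $|0\rangle$ ($a|0\rangle=0$, $\langle0|a^\dagger=0$). For positive integers $n$ let $A_n^\dagger$ act on the formal span of $\{(a^\dagger)^m|0\rangle\}_{m\ge0}$ by $A_n^\dagger(a^\dagger)^m|0\rangle=\frac{m!}{(mn)!}(a^\dagger)^{mn}|0\rangle$, and let $A_n$ act from the right on the formal span of $\{\langle0|a^m\}_{m\ge0}$ by $\langle0|a^mA_n=\langle0|a^{mn}$. Then, with the infinite products over primes understood as formal series, $$\Big(\prod_{p\text{ prime}}\frac{1}{1-A_p^\dagger}\Big)a^\dagger|0\rangle=\sum_{n\ge1}\frac{1}{n!}(a^\dagger)^n|0\rangle,\qquad \prod_{p\text{ prime}}(1-A_p^\dagger)\sum_{n\ge1}\frac{1}{n!}(a^\dagger)^n|0\rangle=a^\dagger|0\rangle,$$ $$\langle0|a\Big(\prod_{p\text{ prime}}\frac{1}{1-A_p}\Big)=\sum_{n\ge1}\langle0|a^n,\qquad \sum_{n\ge1}\langle0|a^n\prod_{p\text{ prime}}(1-A_p)=\langle0|a.$$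
   Context: Since the $A_p^\dagger$ commute, $\frac{1}{1-A_p^\dagger}:=\sum_{k\ge0}(A_p^\dagger)^k$ and infinite products over primes are expanded formally as sums of monomials in the $A_p^\dagger$; applied to the vectors above, each coefficient of $(a^\dagger)^N|0\rangle$ ($N\ge1$) receives only finitely many contributions, and the result is interpreted coefficientwise in the formal space $\mathbb C[[a^\dagger]]|0\rangle$. The same conventions apply to the $A_p$ acting on bras. *)

theory Defs
  imports "HOL-Analysis.Analysis" "HOL-Computational_Algebra.Primes"
begin

text \<open>A ket is a formal series  sum_m c m (a^dagger)^m |0>, represented by its
  coefficient function c.  A bra is a formal series  sum_m b m <0| a^m,
  represented by its coefficient function b.\<close>

type_synonym ket = "nat \<Rightarrow> complex"
type_synonym bra = "nat \<Rightarrow> complex"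

text \<open>A_n^dagger (a^dagger)^m|0> = m!/(mn)! (a^dagger)^(mn)|0>, extended linearly
  (coefficientwise) to formal series.\<close>
definition Adag :: "nat \<Rightarrow> ket \<Rightarrow> ket" where
  "Adag n c = (\<lambda>N. \<Sum>m\<in>{m. m * n = N}. c m * of_real (fact m / fact (m * n)))"

text \<open><0| a^m A_n = <0| a^(mn), extended linearly to formal series (right action).\<close>
definition Abra :: "nat \<Rightarrow> bra \<Rightarrow> bra" where
  "Abra n b = (\<lambda>N. \<Sum>m\<in>{m. m * n = N}. b m)"

text \<open>Exponent vectors of monomials prod_p (A_p)^(k p): finitely supported on primes.\<close>
definition prime_exps :: "(nat \<Rightarrow> nat) set" where
  "prime_exps = {k. finite {p. k p \<noteq> 0} \<and> (\<forall>p. k p \<noteq> 0 \<longrightarrow> prime p)}"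

text \<open>Finite sets of primes (monomials of the expansion of prod_p (1 - A_p)).\<close>
definition prime_sets :: "nat set set" where
  "prime_sets = {S. finite S \<and> (\<forall>p\<in>S. prime p)}"

text \<open>Apply the monomial prod_p (A_p)^(k p) (operators commute; we apply them
  in increasing order of p).\<close>
definition mono_op :: "(nat \<Rightarrow> 'a \<Rightarrow> 'a) \<Rightarrow> (nat \<Rightarrow> nat) \<Rightarrow> 'a \<Rightarrow> 'a" where
  "mono_op A k v = foldr (\<lambda>p. (A p ^^ k p)) (sorted_list_of_set {p. k p \<noteq> 0}) v"

definition set_op :: "(nat \<Rightarrow> 'a \<Rightarrow> 'a) \<Rightarrow> nat set \<Rightarrow> 'a \<Rightarrow> 'a" where
  "set_op A S v = foldr A (sorted_list_of_set S) v"

text \<open>(prod_p 1/(1-A_p)) v, coefficient N equals w N: formal expansion as a sum of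
  monomials, interpreted coefficientwise.\<close>
definition inv_prod_eq :: "(nat \<Rightarrow> (nat \<Rightarrow> complex) \<Rightarrow> (nat \<Rightarrow> complex))
    \<Rightarrow> (nat \<Rightarrow> complex) \<Rightarrow> (nat \<Rightarrow> complex) \<Rightarrow> bool" where
  "inv_prod_eq A v w \<longleftrightarrow> (\<forall>N. ((\<lambda>k. mono_op A k v N) has_sum w N) prime_exps)"

text \<open>(prod_p (1-A_p)) v = w coefficientwise.\<close>
definition prod_eq :: "(nat \<Rightarrow> (nat \<Rightarrow> complex) \<Rightarrow> (nat \<Rightarrow> complex))
    \<Rightarrow> (nat \<Rightarrow> complex) \<Rightarrow> (nat \<Rightarrow> complex) \<Rightarrow> bool" where
  "prod_eq A v w \<longleftrightarrow>
     (\<forall>N. ((\<lambda>S. (-1) ^ card S * set_op A S v N) has_sum w N) prime_sets)"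

definition single1 :: "nat \<Rightarrow> complex" where
  "single1 = (\<lambda>N. if N = 1 then 1 else 0)"

definition exp_ket :: ket where
  "exp_ket = (\<lambda>N. if N \<ge> 1 then 1 / of_nat (fact N) else 0)"

definition geom_bra :: bra where
  "geom_bra = (\<lambda>N. if N \<ge> 1 then 1 else 0)"

end

theory Submission imports Defs begin

definition dil :: "(nat \<Rightarrow> complex) \<Rightarrow> nat \<Rightarrow> (nat\<Rightarrow>complex) \<Rightarrow> (nat\<Rightarrow>complex)" where
 "dil f q v = (\<lambda>N. if q dvd N then v (N div q) * f (N div q) / f N else 0)"

lemma set_mult_eq: "(p::nat) > 0 \<Longrightarrow> {m. m * p = N} = (if p dvd N then {N div p} else {})"
  by auto

lemma Adag_dil: "p > 0 \<Longrightarrow> Adag p = dil (\<lambda>N. of_real (fact N)) p"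
  unfolding Adag_def dil_def by (auto simp: set_mult_eq fun_eq_iff)

lemma Abra_dil: "p > 0 \<Longrightarrow> Abra p = dil (\<lambda>_. 1) p"
  unfolding Abra_def dil_def by (auto simp: set_mult_eq fun_eq_iff)

lemma dil_1: "(\<And>N. f N \<noteq> 0) \<Longrightarrow> dil f (Suc 0) v = v"
  unfolding dil_def by auto

lemma dil_comp:
  assumes "a > 0" "b > 0" "\<And>N. f N \<noteq> 0"
  shows "dil f a (dil f b v) = dil f (a*b) v"
proof
  fix N
  show "dil f a (dil f b v) N = dil f (a*b) v N"
  proof (cases "a dvd N")
    case True
    then have iff: "b dvd N div a \<longleftrightarrow> a * b dvd N"
      using assms by (metis dvd_div_iff_mult mult.commute not_gr0)
    have d: "N div a div b = N div (a*b)" by (simp add: div_mult2_eq)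
    show ?thesis using True assms unfolding dil_def iff d by auto
  next
    case False
    then have "\<not> a * b dvd N" using dvd_mult_left by blast
    then show ?thesis using False unfolding dil_def by simp
  qed
qed

lemma dil_pow:
  assumes "p > 0" "\<And>N. f N \<noteq> 0"
  shows "(dil f p ^^ n) v = dil f (p^n) v"
  by (induction n) (auto simp: dil_1 assms dil_comp)

lemma dil_foldr_pow:
  assumes "\<forall>p\<in>set xs. p > 0" "\<And>N. f N \<noteq> 0"
  shows "foldr (\<lambda>p. dil f p ^^ k p) xs v = dil f (\<Prod>p\<leftarrow>xs. p ^ k p) v"
  using assms(1)
proof (induction xs)
  case (Cons a xs)
  have "(\<Prod>p\<leftarrow>xs. p ^ k p) > 0" using Cons.prems
    by (induction xs) auto
  then show ?case using Cons by (auto simp: assms(2) dil_pow dil_comp)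
qed (auto simp: dil_1 assms(2))

lemma dil_foldr:
  assumes "\<forall>p\<in>set xs. p > 0" "\<And>N. f N \<noteq> 0"
  shows "foldr (dil f) xs v = dil f (prod_list xs) v"
  using assms(1)
proof (induction xs)
  case (Cons a xs)
  have "prod_list xs > 0" using Cons.prems
    by (induction xs) auto
  then show ?case using Cons by (auto simp: assms(2) dil_comp)
qed (auto simp: dil_1 assms(2))

definition qk :: "(nat \<Rightarrow> nat) \<Rightarrow> nat" where
  "qk k = (\<Prod>p\<in>{p. k p \<noteq> 0}. p ^ k p)"

lemma qk_pos: "k \<in> prime_exps \<Longrightarrow> qk k > 0"
  unfolding qk_def prime_exps_def
  by (auto intro!: prod_pos simp: prime_gt_0_nat)

lemma mono_op_dil:
  assumes "k \<in> prime_exps" "\<forall>p. prime p \<longrightarrow> A p = dil f p" "\<And>N. f N \<noteq> 0"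
  shows "mono_op A k v = dil f (qk k) v"
proof -
  let ?xs = "sorted_list_of_set {p. k p \<noteq> 0}"
  have fin: "finite {p. k p \<noteq> 0}" and pr0: "\<forall>p. k p \<noteq> 0 \<longrightarrow> prime p"
    using assms(1) unfolding prime_exps_def by blast+
  have pr: "\<forall>p\<in>set ?xs. prime p"
    unfolding set_sorted_list_of_set[OF fin] using pr0 by blast
  have "mono_op A k v = foldr (\<lambda>p. dil f p ^^ k p) ?xs v"
    unfolding mono_op_def
  proof (rule foldr_cong[OF refl refl])
    fix a x assume "x \<in> set ?xs"
    then have "A x = dil f x" using pr assms(2) by blast
    then show "(A x ^^ k x) a = (dil f x ^^ k x) a" by simp
  qed
  also have "\<dots> = dil f (\<Prod>p\<leftarrow>?xs. p ^ k p) v"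
    by (rule dil_foldr_pow) (use pr prime_gt_0_nat in blast, rule assms(3))
  also have "(\<Prod>p\<leftarrow>?xs. p ^ k p) = qk k"
  proof -
    have "qk k = (\<Prod>p\<in>set ?xs. p ^ k p)" unfolding qk_def set_sorted_list_of_set[OF fin] ..
    also have "\<dots> = (\<Prod>p\<leftarrow>?xs. p ^ k p)" by (rule prod.distinct_set_conv_list) simp
    finally show ?thesis by simp
  qed
  finally show ?thesis .
qed

lemma set_op_dil:
  assumes "S \<in> prime_sets" "\<forall>p. prime p \<longrightarrow> A p = dil f p" "\<And>N. f N \<noteq> 0"
  shows "set_op A S v = dil f (\<Prod>S) v"
proof -
  let ?xs = "sorted_list_of_set S"
  have fin: "finite S" and pr0: "\<forall>p\<in>S. prime p"
    using assms(1) unfolding prime_sets_def by blast+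
  have pr: "\<forall>p\<in>set ?xs. prime p"
    unfolding set_sorted_list_of_set[OF fin] using pr0 by blast
  have "set_op A S v = foldr (dil f) ?xs v"
    unfolding set_op_def
  proof (rule foldr_cong[OF refl refl])
    fix a x assume "x \<in> set ?xs"
    then have "A x = dil f x" using pr assms(2) by blast
    then show "A x a = dil f x a" by simp
  qed
  also have "\<dots> = dil f (prod_list ?xs) v"
    by (rule dil_foldr) (use pr prime_gt_0_nat in blast, rule assms(3))
  also have "prod_list ?xs = \<Prod>S"
  proof -
    have "\<Prod>S = (\<Prod>p\<in>set ?xs. p)" unfolding set_sorted_list_of_set[OF fin] ..
    also have "\<dots> = prod_list (map (\<lambda>p. p) ?xs)" by (rule prod.distinct_set_conv_list) simp
    finally show ?thesis by simp
  qed
  finally show ?thesis .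
qed

lemma qk_unique:
  assumes "k \<in> prime_exps" "qk k = N"
  shows "k = (\<lambda>p. if prime p then multiplicity p N else 0)"
proof
  fix p
  have fin: "finite {p. k p \<noteq> 0}" and pr: "\<And>p. k p \<noteq> 0 \<Longrightarrow> prime p"
    using assms(1) unfolding prime_exps_def by auto
  show "k p = (if prime p then multiplicity p N else 0)"
  proof (cases "prime p")
    case True
    have "multiplicity p N = (if p \<in> {p. k p \<noteq> 0} then k p else 0)"
      unfolding assms(2)[symmetric] qk_def
      by (rule multiplicity_prod_prime_powers) (use fin pr True in auto)
    then show ?thesis using True by auto
  next
    case False then show ?thesis using pr by auto
  qed
qed

lemma qk_exists:
  assumes "N > 0"
  shows "(\<lambda>p. if prime p then multiplicity p N else 0) \<in> prime_exps"
    "qk (\<lambda>p. if prime p then multiplicity p N else 0) = N"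
proof -
  have supp: "{p. (if prime p then multiplicity p N else 0) \<noteq> 0} = prime_factors N"
    by (auto simp: prime_factors_multiplicity)
  show "(\<lambda>p. if prime p then multiplicity p N else 0) \<in> prime_exps"
    unfolding prime_exps_def using supp by auto
  have "qk (\<lambda>p. if prime p then multiplicity p N else 0) = (\<Prod>p\<in>prime_factors N. p ^ multiplicity p N)"
    unfolding qk_def supp by (intro prod.cong) (auto simp: in_prime_factors_imp_prime)
  also have "\<dots> = N" using assms by (simp add: prod_prime_factors)
  finally show "qk (\<lambda>p. if prime p then multiplicity p N else 0) = N" .
qed

lemma inv_generic:
  assumes A: "\<forall>p. prime p \<longrightarrow> A p = dil f p" and f: "\<And>N. f N \<noteq> 0" and f1: "f 1 = 1"
  shows "inv_prod_eq A single1 (\<lambda>N. if N \<ge> 1 then 1 / f N else 0)"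
  unfolding inv_prod_eq_def
proof
  fix N :: nat
  have tm: "mono_op A k single1 N = (if qk k = N then 1 / f N else 0)" if k: "k \<in> prime_exps" for k
  proof -
    have q: "qk k > 0" using qk_pos[OF k] .
    have "mono_op A k single1 N = dil f (qk k) single1 N" using mono_op_dil[OF k A f] by simp
    also have "\<dots> = (if qk k = N then 1 / f N else 0)"
      using q f1 unfolding dil_def single1_def
      by (auto elim!: dvdE)
    finally show ?thesis .
  qed
  show "((\<lambda>k. mono_op A k single1 N) has_sum (if N \<ge> 1 then 1 / f N else 0)) prime_exps"
  proof (cases "N = 0")
    case True
    show ?thesis
    proof (intro has_sum_finite_neutralI[where B="{}"])
      fix k assume "k \<in> prime_exps - {}"
      then show "mono_op A k single1 N = 0" using tm[of k] qk_pos[of k] True by auto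
    qed (use True in auto)
  next
    case False
    define k0 where "k0 = (\<lambda>p. if prime p then multiplicity p N else 0)"
    have k0: "k0 \<in> prime_exps" "qk k0 = N" using qk_exists[of N] False unfolding k0_def by auto
    show ?thesis
    proof (intro has_sum_finite_neutralI[where B="{k0}"])
      fix k assume "k \<in> prime_exps - {k0}"
      then show "mono_op A k single1 N = 0" using qk_unique[of k N] tm[of k] unfolding k0_def by auto
    qed (use k0 False tm in auto)
  qed
qed

lemma prod_dvd_iff:
  assumes S: "S \<in> prime_sets" and N: "N > 0"
  shows "\<Prod>S dvd N \<longleftrightarrow> S \<subseteq> prime_factors N"
proof
  have fin: "finite S" and pr: "\<And>p. p \<in> S \<Longrightarrow> prime p" using S unfolding prime_sets_def by auto
  {
    assume d: "\<Prod>S dvd N"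
    show "S \<subseteq> prime_factors N"
    proof
      fix p assume p: "p \<in> S"
      have "p dvd \<Prod>S" using fin p by (rule dvd_prodI)
      then have "p dvd N" using d by (rule dvd_trans)
      then show "p \<in> prime_factors N" using pr[OF p] N by (auto simp: in_prime_factors_iff)
    qed
  }
  {
    assume sub: "S \<subseteq> prime_factors N"
    have "\<Prod>S dvd (\<Prod>p\<in>S. p ^ multiplicity p N)"
    proof (intro prod_dvd_prod)
      fix p assume p: "p \<in> S"
      then have "multiplicity p N \<ge> 1" using sub by (auto simp: prime_factors_multiplicity)
      then show "p dvd p ^ multiplicity p N" by (simp add: dvd_power)
    qed
    also have "\<dots> dvd (\<Prod>p\<in>prime_factors N. p ^ multiplicity p N)"
      by (intro prod_dvd_prod_subset sub) auto
    also have "\<dots> = N" using N by (simp add: prod_prime_factors)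
    finally show "\<Prod>S dvd N" .
  }
qed

lemma alt_sum: "finite P \<Longrightarrow> (\<Sum>S\<in>Pow P. (-1) ^ card S :: complex) = (if P = {} then 1 else 0)"
proof -
  assume P: "finite P"
  have "(\<Sum>S\<in>Pow P. (-1) ^ card S :: complex) = (\<Prod>x\<in>P. (1::complex) - 1)"
    using prod_diff_conv_sum[OF P, of "\<lambda>_. 1::complex" "\<lambda>_. 1"] by simp
  then show ?thesis using P by auto
qed

lemma prod_generic:
  assumes A: "\<forall>p. prime p \<longrightarrow> A p = dil f p" and f: "\<And>N. f N \<noteq> 0" and f1: "f 1 = 1"
  shows "prod_eq A (\<lambda>N. if N \<ge> 1 then 1 / f N else 0) single1"
  unfolding prod_eq_def
proof
  fix N :: nat
  let ?v = "(\<lambda>N. if N \<ge> 1 then 1 / f N else 0)"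
  have tm: "set_op A S ?v N = (if N > 0 \<and> \<Prod>S dvd N then 1 / f N else 0)" if S: "S \<in> prime_sets" for S
  proof -
    have q: "\<Prod>S > 0" using S unfolding prime_sets_def by (auto intro!: prod_pos simp: prime_gt_0_nat)
    have "set_op A S ?v N = dil f (\<Prod>S) ?v N" using set_op_dil[OF S A f] by simp
    also have "\<dots> = (if N > 0 \<and> \<Prod>S dvd N then 1 / f N else 0)"
      using q f unfolding dil_def
      by (auto elim!: dvdE)
    finally show ?thesis .
  qed
  show "((\<lambda>S. (-1) ^ card S * set_op A S ?v N) has_sum single1 N) prime_sets"
  proof (cases "N = 0")
    case True
    show ?thesis
    proof (intro has_sum_finite_neutralI[where B="{}"])
      fix S assume "S \<in> prime_sets - {}"
      then show "(-1) ^ card S * set_op A S ?v N = 0" using tm[of S] True by auto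
    qed (use True in \<open>auto simp: single1_def\<close>)
  next
    case False
    have sub: "Pow (prime_factors N) \<subseteq> prime_sets"
      unfolding prime_sets_def by (auto simp: in_prime_factors_imp_prime intro: finite_subset)
    have e: "prime_factors N = {} \<longleftrightarrow> N = 1"
    proof
      assume "prime_factors N = {}"
      then show "N = 1" using prod_prime_factors[of N] False by simp
    qed simp
    show ?thesis
    proof (intro has_sum_finite_neutralI[where B="Pow (prime_factors N)"])
      fix S assume "S \<in> prime_sets - Pow (prime_factors N)"
      then have S: "S \<in> prime_sets" and nS: "\<not> S \<subseteq> prime_factors N" by auto
      have "\<not> \<Prod>S dvd N" using prod_dvd_iff[OF S] False nS by simp
      then show "(-1) ^ card S * set_op A S ?v N = 0" using tm[OF S] by simp
    next
      have "(\<Sum>S\<in>Pow (prime_factors N). (-1) ^ card S * set_op A S ?v N)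
          = (\<Sum>S\<in>Pow (prime_factors N). (-1) ^ card S) * (1 / f N)"
        unfolding sum_distrib_right
      proof (intro sum.cong refl)
        fix S assume SP: "S \<in> Pow (prime_factors N)"
        then have S: "S \<in> prime_sets" using sub by auto
        have "\<Prod>S dvd N" using prod_dvd_iff[OF S] False SP by simp
        then show "(-1) ^ card S * set_op A S ?v N = (-1) ^ card S * (1 / f N)"
          using tm[OF S] False by simp
      qed
      also have "\<dots> = single1 N" using alt_sum[of "prime_factors N"] e f1 unfolding single1_def by auto
      finally show "single1 N = (\<Sum>S\<in>Pow (prime_factors N). (-1) ^ card S * set_op A S ?v N)" ..
    qed (use sub in auto)
  qed
qed

theorem mainTheorem5:
  shows "inv_prod_eq Adag single1 exp_ket \<and> prod_eq Adag exp_ket single1 \<and>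
         inv_prod_eq Abra single1 geom_bra \<and> prod_eq Abra geom_bra single1"
proof -
  have A1: "\<forall>p. prime p \<longrightarrow> Adag p = dil (\<lambda>N. of_real (fact N)) p"
    by (auto simp: Adag_dil prime_gt_0_nat)
  have A2: "\<forall>p. prime p \<longrightarrow> Abra p = dil (\<lambda>_. 1) p"
    by (auto simp: Abra_dil prime_gt_0_nat)
  have f1: "\<And>N. (of_real (fact N) :: complex) \<noteq> 0" by simp
  have e1: "exp_ket = (\<lambda>N. if N \<ge> 1 then 1 / of_real (fact N) else 0)"
    unfolding exp_ket_def by (auto simp: fun_eq_iff)
  have e2: "geom_bra = (\<lambda>N. if N \<ge> 1 then 1 / 1 else 0)"
    unfolding geom_bra_def by (auto simp: fun_eq_iff)
  show ?thesis unfolding e1 e2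
    using inv_generic[OF A1 f1] prod_generic[OF A1 f1] inv_generic[OF A2] prod_generic[OF A2]
    by simp
qed

end
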